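(* Let $p$ be a prime with $p\equiv 3 \pmod 4$. Then $$\sum_{k=0}^{p-1}\frac{\binom{2k}{k} f_k}{(-16)^k} \equiv 0 \pmod{p}.$$
   Context: The Franel numbers are defined by $f_n=\sum_{k=0}^n \binom{n}{k}^3$ for integers $n\ge 0$. The left-hand side is a rational number whose denominator is a power of $2$, hence coprime to $p$; a congruence modulo $p$ between such rationals means that the difference has numerator (in lowest terms) divisible by $p$ and denominator coprime to $p$. *)

theory Defs
  imports Complex_Main "HOL-Computational_Algebra.Primes"
begin

definition franel :: "nat \<Rightarrow> nat" where
  "franel n = (\<Sum>k=0..n. (n choose k) ^ 3)"

definition rat_cong :: "rat \<Rightarrow> rat \<Rightarrow> int \<Rightarrow> bool" where
  "rat_cong x y m = (let (a, b) = quotient_of (x - y) in m dvd a \<and> coprime b m)"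

end

theory Submission
  imports Defs "HOL-Number_Theory.Cong"
begin


lemma strehl_aux1:
  assumes "i \<le> k" "j \<le> k"
  shows "(k choose j) * (j choose (k - i)) = (k choose i) * (i choose (k - j))"
proof (cases "k - i \<le> j")
  case True
  have "(k choose j) * (j choose (k - i)) = (k choose (k - i)) * ((k - (k - i)) choose (j - (k - i)))"
    using choose_mult[OF True assms(2)] .
  also have "k - (k - i) = i" using assms by simp
  also have "(k choose (k - i)) = (k choose i)" using binomial_symmetric[OF assms(1)] by simp
  also have "(i choose (j - (k - i))) = (i choose (k - j))"
    using binomial_symmetric[of "j - (k - i)" i] True assms by (simp add: algebra_simps)
  finally show ?thesis .
next
  case False
  then show ?thesis using assms by (simp add: binomial_eq_0)
qed

lemma strehl_inner:
  assumes "i \<le> k"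
  shows "(\<Sum>j\<le>k. (if i \<le> j then (k - i) choose (j - i) else 0) * (i choose (k - j))) = k choose i"
proof -
  have split: "{..k} = {..<i} \<union> {i..k}" using assms by auto
  have "(\<Sum>j\<le>k. (if i \<le> j then (k - i) choose (j - i) else 0) * (i choose (k - j)))
      = (\<Sum>j\<in>{i..k}. ((k - i) choose (j - i)) * (i choose (k - j)))"
    unfolding split by (subst sum.union_disjoint) auto
  also have "\<dots> = (\<Sum>t\<in>{0..k-i}. ((k - i) choose t) * (i choose (k - i - t)))"
    using sum.shift_bounds_cl_nat_ivl[of "\<lambda>j. ((k - i) choose (j - i)) * (i choose (k - j))" 0 i "k-i"] assms
    by (simp add: algebra_simps)
  also have "\<dots> = k choose (k - i)"
    using vandermonde[of "k-i" i "k-i"] assms by (simp add: atLeast0AtMost)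
  also have "\<dots> = k choose i" using binomial_symmetric[OF assms] by simp
  finally show ?thesis .
qed

lemma strehl:
  "(\<Sum>j\<le>k. (k choose j)^3) = (\<Sum>j\<le>k. (k choose j)^2 * ((2*j) choose k))"
proof -
  have "(\<Sum>j\<le>k. (k choose j)^2 * ((2*j) choose k))
     = (\<Sum>j\<le>k. \<Sum>i\<le>k. (k choose j)^2 * ((j choose i) * (j choose (k - i))))"
    by (simp add: sum_distrib_left[symmetric] mult_2 vandermonde)
  also have "\<dots> = (\<Sum>j\<le>k. \<Sum>i\<le>k. (k choose i)^2 * ((if i \<le> j then (k - i) choose (j - i) else 0) * (i choose (k - j))))"
  proof (intro sum.cong refl)
    fix j i assume j: "j \<in> {..k}" and i: "i \<in> {..k}"
    show "(k choose j)^2 * ((j choose i) * (j choose (k - i))) =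
      (k choose i)^2 * ((if i \<le> j then (k - i) choose (j - i) else 0) * (i choose (k - j)))"
    proof (cases "i \<le> j")
      case True
      have a: "(k choose j) * (j choose i) = (k choose i) * ((k - i) choose (j - i))"
        using choose_mult[OF True] j by simp
      have b: "(k choose j) * (j choose (k - i)) = (k choose i) * (i choose (k - j))"
        using strehl_aux1 i j by simp
      have "(k choose j)^2 * ((j choose i) * (j choose (k - i))) =
         ((k choose j) * (j choose i)) * ((k choose j) * (j choose (k - i)))"
        by (simp add: power2_eq_square algebra_simps)
      also have "\<dots> = (k choose i)^2 * (((k - i) choose (j - i)) * (i choose (k - j)))"
        unfolding a b by (simp add: power2_eq_square algebra_simps)
      finally show ?thesis using True by simp
    next
      case False
      then show ?thesis by simp
    qed
  qed
  also have "\<dots> = (\<Sum>i\<le>k. (k choose i)^2 * (\<Sum>j\<le>k. (if i \<le> j then (k - i) choose (j - i) else 0) * (i choose (k - j))))"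
    by (subst sum.swap) (simp add: sum_distrib_left)
  also have "\<dots> = (\<Sum>i\<le>k. (k choose i)^3)"
    by (intro sum.cong refl) (simp add: strehl_inner power3_eq_cube power2_eq_square)
  finally show ?thesis by simp
qed



declare binomial_Suc_Suc[simp del]

lemma central_rec: "Suc k * ((2 * Suc k) choose Suc k) = 2 * (2*k+1) * ((2*k) choose k)"
proof -
  have h1: "Suc k * (Suc (Suc (2*k)) choose Suc k) = Suc (Suc (2*k)) * (Suc (2*k) choose k)"
    by (rule Suc_times_binomial)
  have h2: "Suc k * (Suc (2*k) choose Suc k) = Suc (2*k) * ((2*k) choose k)"
    by (rule Suc_times_binomial)
  have h3: "Suc (2*k) choose k = Suc (2*k) choose Suc k"
    using binomial_symmetric[of k "Suc (2*k)"] by simp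
  have "Suc k * (Suc k * ((2 * Suc k) choose Suc k)) = Suc k * (2 * (2*k+1) * ((2*k) choose k))"
  proof -
    have "Suc k * (Suc k * ((2 * Suc k) choose Suc k)) = Suc k * (Suc (Suc (2*k)) * (Suc (2*k) choose Suc k))"
      using h1 h3 by simp
    also have "\<dots> = Suc (Suc (2*k)) * (Suc k * (Suc (2*k) choose Suc k))" by simp
    also have "\<dots> = Suc (Suc (2*k)) * (Suc (2*k) * ((2*k) choose k))" using h2 by simp
    finally show ?thesis by simp
  qed
  then show ?thesis by (metis mult_left_cancel nat.distinct(1))
qed

lemma binom_rec: "Suc k * (n choose Suc k) = (n - k) * (n choose k)"
proof (cases n)
  case 0 then show ?thesis by simp
next
  case (Suc m)
  have "Suc k * (n choose Suc k) = n * (m choose k)" using Suc Suc_times_binomial[of k m] by simp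
  also have "\<dots> = (n - k) * (n choose k)" using binomial_absorb_comp[of n k] Suc by simp
  finally show ?thesis .
qed

lemma central_cong:
  assumes p: "prime p" and pn: "p = 2*n+1" and kn: "k \<le> n"
  shows "int p dvd ((-1)^k * int ((2*k) choose k) - 4^k * int (n choose k))"
  using kn
proof (induction k)
  case 0 then show ?case by simp
next
  case (Suc k)
  define X where "X = (-1::int)^k * int ((2*k) choose k)"
  define Y where "Y = (4::int)^k * int (n choose k)"
  have ih: "int p dvd X - Y" using Suc X_def Y_def by simp
  have hx: "int (Suc k) * ((-1)^Suc k * int ((2 * Suc k) choose Suc k)) = - (2 * (2*int k+1)) * X"
  proof -
    have "int (Suc k * ((2 * Suc k) choose Suc k)) = int (2 * (2*k+1) * ((2*k) choose k))"
      using central_rec by presburger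
    then have "int (Suc k) * int ((2 * Suc k) choose Suc k) = 2 * (2*int k+1) * int ((2*k) choose k)"
      by (simp add: algebra_simps)
    moreover have "int (Suc k) * ((-1)^Suc k * int ((2 * Suc k) choose Suc k)) = - ((-1)^k) * (int (Suc k) * int ((2 * Suc k) choose Suc k))"
      by (simp add: algebra_simps)
    ultimately show ?thesis unfolding X_def by (simp add: algebra_simps)
  qed
  have hy: "int (Suc k) * (4^Suc k * int (n choose Suc k)) = 4 * (int n - int k) * Y"
  proof -
    have "int (Suc k * (n choose Suc k)) = int ((n - k) * (n choose k))" using binom_rec by presburger
    then have e2: "int (Suc k) * int (n choose Suc k) = (int n - int k) * int (n choose k)"
      using Suc.prems by (simp add: of_nat_diff algebra_simps)
    have "int (Suc k) * (4^Suc k * int (n choose Suc k)) = 4 * 4^k * (int (Suc k) * int (n choose Suc k))"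
      by (simp only: power_Suc mult_ac)
    also have "\<dots> = 4 * 4^k * ((int n - int k) * int (n choose k))" unfolding e2 ..
    finally show ?thesis unfolding Y_def by (simp add: algebra_simps)
  qed
  have "int (Suc k) * ((-1)^Suc k * int ((2 * Suc k) choose Suc k) - 4^Suc k * int (n choose Suc k))
      = - (2 * (2*int k+1)) * (X - Y) - 2 * int p * Y"
    using hx hy pn by (simp add: algebra_simps)
  then have d: "int p dvd int (Suc k) * ((-1)^Suc k * int ((2 * Suc k) choose Suc k) - 4^Suc k * int (n choose Suc k))"
    using ih by simp
  have pi: "prime (int p)" using p by simp
  have "\<not> int p dvd int (Suc k)"
  proof
    assume "int p dvd int (Suc k)"
    then have "p dvd Suc k" by (simp only: int_dvd_int_iff)
    then have "p \<le> Suc k" by (simp add: dvd_imp_le)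
    then show False using Suc.prems pn by simp
  qed
  then show ?case using d pi by (simp add: prime_dvd_mult_iff)
qed

lemma central_vanish:
  assumes p: "prime p" and pn: "p = 2*n+1" and k1: "n < k" and k2: "k < p"
  shows "p dvd ((2*k) choose k)"
proof -
  have "fact k * fact (2*k - k) * ((2*k) choose k) = (fact (2*k) :: nat)"
    by (rule binomial_fact_lemma) simp
  then have e: "fact k * fact k * ((2*k) choose k) = (fact (2*k) :: nat)" by simp
  have "p dvd (fact (2*k) :: nat)" using p k1 pn by (simp add: prime_dvd_fact_iff)
  then have "p dvd fact k * fact k * ((2*k) choose k)" using e by simp
  moreover have "\<not> p dvd (fact k :: nat)" using p k2 by (simp add: prime_dvd_fact_iff)
  ultimately show ?thesis using p by (simp add: prime_dvd_mult_iff)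
qed



definition EE :: "nat \<Rightarrow> nat \<Rightarrow> nat" where
  "EE n j = (\<Sum>i\<le>n-j. (n choose j) * ((n-j) choose i) * (j choose i) * 4^(n-j-i))"
definition DD :: "nat \<Rightarrow> nat \<Rightarrow> nat" where
  "DD n j = (n choose j)^2 * (\<Sum>i\<le>n. ((n-j) choose i) * (j choose i) * 4^(n-i))"

lemma term_eq:
  assumes "i + j \<le> n"
  shows "(n choose (i+j)) * 4^(n-(i+j)) * ((i+j) choose j)^2 * ((2*j) choose (i+j))
       = ((2*j) choose j) * ((n choose j) * ((n-j) choose i) * (j choose i) * 4^(n-j-i))"
proof -
  have a: "(n choose (i+j)) * ((i+j) choose j) = (n choose j) * ((n-j) choose i)"
    using choose_mult[of j "i+j" n] assms by simp
  have b: "((i+j) choose j) * ((2*j) choose (i+j)) = ((2*j) choose j) * (j choose i)"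
  proof (cases "i \<le> j")
    case True
    then show ?thesis using choose_mult[of j "i+j" "2*j"] by (simp add: mult.commute)
  next
    case False
    then show ?thesis by (simp add: binomial_eq_0)
  qed
  have "(n choose (i+j)) * 4^(n-(i+j)) * ((i+j) choose j)^2 * ((2*j) choose (i+j))
      = ((n choose (i+j)) * ((i+j) choose j)) * (((i+j) choose j) * ((2*j) choose (i+j))) * 4^(n-(i+j))"
    by (simp add: power2_eq_square mult_ac)
  also have "\<dots> = ((2*j) choose j) * ((n choose j) * ((n-j) choose i) * (j choose i) * 4^(n-j-i))"
    unfolding a b by (simp add: ac_simps)
  finally show ?thesis .
qed

lemma A_exact:
  "(\<Sum>k\<le>n. (n choose k) * 4^(n-k) * franel k) = (\<Sum>j\<le>n. ((2*j) choose j) * EE n j)"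
proof -
  define g where "g k j = (n choose k) * 4^(n-k) * (k choose j)^2 * ((2*j) choose k)" for k j
  have "(\<Sum>k\<le>n. (n choose k) * 4^(n-k) * franel k) = (\<Sum>k\<le>n. \<Sum>j\<le>k. g k j)"
    unfolding franel_def g_def atLeast0AtMost strehl by (simp add: sum_distrib_left mult_ac)
  also have "\<dots> = (\<Sum>k\<le>n. \<Sum>j\<le>n. g k j)"
  proof (rule sum.cong[OF refl])
    fix k assume "k \<in> {..n}"
    then show "(\<Sum>j\<le>k. g k j) = (\<Sum>j\<le>n. g k j)"
      by (intro sum.mono_neutral_left) (auto simp: g_def binomial_eq_0)
  qed
  also have "\<dots> = (\<Sum>j\<le>n. \<Sum>k\<le>n. g k j)" by (rule sum.swap)
  also have "\<dots> = (\<Sum>j\<le>n. ((2*j) choose j) * EE n j)"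
  proof (intro sum.cong refl)
    fix j assume j: "j \<in> {..n}"
    have "(\<Sum>k\<le>n. g k j) = (\<Sum>k\<in>{j..n}. g k j)"
      by (intro sum.mono_neutral_right) (auto simp: g_def binomial_eq_0)
    also have "\<dots> = (\<Sum>i\<in>{0..n-j}. g (i+j) j)"
      using sum.shift_bounds_cl_nat_ivl[of "\<lambda>k. g k j" 0 j "n-j"] j by simp
    also have "\<dots> = (\<Sum>i\<le>n-j. ((2*j) choose j) * ((n choose j) * ((n-j) choose i) * (j choose i) * 4^(n-j-i)))"
      unfolding atLeast0AtMost
      by (intro sum.cong refl) (use j in \<open>auto simp: g_def term_eq\<close>)
    also have "\<dots> = ((2*j) choose j) * EE n j"
      unfolding EE_def by (simp add: sum_distrib_left)
    finally show "(\<Sum>k\<le>n. g k j) = ((2*j) choose j) * EE n j" .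
  qed
  finally show ?thesis .
qed

lemma D_eq:
  assumes "j \<le> n"
  shows "4^j * (n choose j) * EE n j = DD n j"
proof -
  have "4^j * (n choose j) * EE n j = (n choose j)^2 * (\<Sum>i\<le>n-j. ((n-j) choose i) * (j choose i) * 4^(n-i))"
    unfolding EE_def sum_distrib_left
  proof (intro sum.cong refl)
    fix i assume i: "i \<in> {..n-j}"
    have "(4::nat)^j * 4^(n-j-i) = 4^(n-i)"
      using i assms by (simp flip: power_add)
    then show "4^j * (n choose j) * ((n choose j) * ((n-j) choose i) * (j choose i) * 4^(n-j-i)) =
       (n choose j)^2 * (((n-j) choose i) * (j choose i) * 4^(n-i))"
      by (simp add: power2_eq_square mult_ac)
  qed
  also have "\<dots> = DD n j" unfolding DD_def
    by (intro arg_cong[where f="\<lambda>x. (n choose j)^2 * x"] sum.mono_neutral_left) (auto simp: binomial_eq_0)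
  finally show ?thesis .
qed

lemma D_sym: "j \<le> n \<Longrightarrow> DD n (n-j) = DD n j"
  unfolding DD_def using binomial_symmetric[of j n] by (simp add: mult_ac)

lemma alt_zero:
  assumes "odd n"
  shows "(\<Sum>j\<le>n. (-1::int)^j * int (DD n j)) = 0"
proof -
  let ?S = "(\<Sum>j\<le>n. (-1::int)^j * int (DD n j))"
  have "?S = (\<Sum>j\<in>{0..n}. (-1::int)^(n+0-j) * int (DD n (n+0-j)))"
    unfolding atLeast0AtMost[symmetric] by (rule sum.atLeastAtMost_rev)
  also have "\<dots> = (\<Sum>j\<in>{0..n}. - ((-1::int)^j * int (DD n j)))"
  proof (intro sum.cong refl)
    fix j assume j: "j \<in> {0..n}"
    have "(-1::int)^(n-j) * (-1)^j = (-1)^n" using j by (simp flip: power_add)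
    also have "\<dots> = -1" using assms by simp
    finally have h1: "(-1::int)^(n-j) * (-1)^j = -1" .
    have h2: "(-1::int)^j * (-1)^j = 1"
    proof -
      have "(-1::int)^j * (-1)^j = ((-1) * (-1))^j" by (rule power_mult_distrib[symmetric])
      then show ?thesis by simp
    qed
    have "(-1::int)^(n-j) = (-1::int)^(n-j) * ((-1)^j * (-1)^j)" using h2 by simp
    also have "\<dots> = ((-1::int)^(n-j) * (-1)^j) * (-1)^j" by (simp only: mult.assoc)
    also have "\<dots> = - ((-1::int)^j)" using h1 by simp
    finally have "(-1::int)^(n-j) = - ((-1::int)^j)" .
    then show "(-1::int)^(n+0-j) * int (DD n (n+0-j)) = - ((-1::int)^j * int (DD n j))"
      using D_sym[of j n] j by simp
  qed
  also have "\<dots> = - ?S" by (simp add: sum_negf atLeast0AtMost)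
  finally show ?thesis by simp
qed

lemma A_dvd:
  assumes p: "prime p" and pn: "p = 2*n+1" and odd: "odd n"
  shows "int p dvd int (\<Sum>k\<le>n. (n choose k) * 4^(n-k) * franel k)"
proof -
  have eq: "int (\<Sum>k\<le>n. (n choose k) * 4^(n-k) * franel k) - (\<Sum>j\<le>n. (-1::int)^j * int (DD n j))
      = (\<Sum>j\<le>n. (int ((2*j) choose j) - (-1)^j * (4^j * int (n choose j))) * int (EE n j))"
    unfolding A_exact of_nat_sum sum_subtractf[symmetric]
  proof (intro sum.cong refl)
    fix j assume j: "j \<in> {..n}"
    have dd: "int (DD n j) = 4^j * int (n choose j) * int (EE n j)"
    proof -
      have "DD n j = 4^j * (n choose j) * EE n j" using D_eq[of j n] j by simp
      then have "int (DD n j) = int (4^j * (n choose j) * EE n j)" by (rule arg_cong)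
      then show ?thesis by (simp only: of_nat_mult of_nat_power of_nat_numeral)
    qed
    have gen: "\<And>a e s c d::int. d = 4^j*c*e \<Longrightarrow> a*e - s*d = (a - s*(4^j*c))*e"
      by (simp add: algebra_simps)
    show "int (((2*j) choose j) * EE n j) - (-1)^j * int (DD n j) =
        (int ((2*j) choose j) - (-1)^j * (4^j * int (n choose j))) * int (EE n j)"
      unfolding of_nat_mult by (rule gen[OF dd])
  qed
  have dZ: "int p dvd (\<Sum>j\<le>n. (int ((2*j) choose j) - (-1)^j * (4^j * int (n choose j))) * int (EE n j))"
  proof (intro dvd_sum dvd_mult2)
    fix j assume j: "j \<in> {..n}"
    have d: "int p dvd ((-1)^j * int ((2*j) choose j) - 4^j * int (n choose j))"
      using central_cong[OF p pn] j by simp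
    have "int ((2*j) choose j) - (-1)^j * (4^j * int (n choose j))
        = (-1)^j * ((-1)^j * int ((2*j) choose j) - 4^j * int (n choose j))"
    proof -
      have "(-1::int)^j * (-1)^j = ((-1) * (-1))^j" by (rule power_mult_distrib[symmetric])
      then have "(-1::int)^j * (-1)^j = 1" by simp
      then show ?thesis by (simp add: algebra_simps)
    qed
    then show "int p dvd int ((2*j) choose j) - (-1)^j * (4^j * int (n choose j))"
      using d by (simp only: dvd_mult)
  qed
  have d1: "int p dvd int (\<Sum>k\<le>n. (n choose k) * 4^(n-k) * franel k) - (\<Sum>j\<le>n. (-1::int)^j * int (DD n j))"
    using dZ unfolding eq[symmetric] .
  have h0: "(\<Sum>j\<le>n. (-1::int)^j * int (DD n j)) = 0" by (rule alt_zero[OF odd])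
  show ?thesis using d1 unfolding h0 diff_zero .
qed



lemma ring_aux:
  fixes u v w z s c d f :: int
  assumes "u*v = w*z"
  shows "s*c*v*f - w*(d*z*f) = (s*c - u*d)*(v*f)"
proof -
  have "(s*c - u*d)*(v*f) = s*c*v*f - (u*v)*d*f" by (simp add: algebra_simps)
  also have "\<dots> = s*c*v*f - (w*z)*d*f" by (simp only: assms)
  finally have "(s*c - u*d)*(v*f) = s*c*v*f - (w*z)*d*f" .
  then show ?thesis by (simp add: mult_ac)
qed

lemma I_dvd:
  assumes p: "prime p" and pn: "p = 2*n+1" and odd: "odd n"
  shows "int p dvd (\<Sum>k\<le>p-1. (-1)^k * int ((2*k) choose k) * 16^(p-1-k) * int (franel k))"
proof -
  define t where "t k = (-1::int)^k * int ((2*k) choose k) * 16^(p-1-k) * int (franel k)" for k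
  have split: "{..p-1} = {..n} \<union> {n<..p-1}" using pn by auto
  have s: "(\<Sum>k\<le>p-1. t k) = (\<Sum>k\<le>n. t k) + (\<Sum>k\<in>{n<..p-1}. t k)"
    unfolding split by (rule sum.union_disjoint) auto
  have d2: "int p dvd (\<Sum>k\<in>{n<..p-1}. t k)"
  proof (rule dvd_sum)
    fix k assume k: "k \<in> {n<..p-1}"
    have "p dvd ((2*k) choose k)" using central_vanish[OF p pn, of k] k pn by auto
    then have "int p dvd int ((2*k) choose k)" by (simp only: int_dvd_int_iff)
    then show "int p dvd t k" unfolding t_def by simp
  qed
  have eq: "(\<Sum>k\<le>n. t k) - 4^(2*p-2-n) * int (\<Sum>k\<le>n. (n choose k) * 4^(n-k) * franel k)
     = (\<Sum>k\<le>n. ((-1)^k * int ((2*k) choose k) - 4^k * int (n choose k)) * (16^(p-1-k) * int (franel k)))"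
    unfolding of_nat_sum sum_distrib_left sum_subtractf[symmetric]
  proof (rule sum.cong[OF refl])
    fix k assume k: "k \<in> {..n}"
    have e: "(4::int)^k * 16^(p-1-k) = 4^(2*p-2-n) * 4^(n-k)"
    proof -
      have "(16::int)^(p-1-k) = 4^(2*(p-1-k))" by (simp add: power_mult)
      then have "(4::int)^k * 16^(p-1-k) = 4^(k + 2*(p-1-k))" by (simp add: power_add)
      also have "k + 2*(p-1-k) = (2*p-2-n) + (n-k)" using k pn by auto
      also have "(4::int)^\<dots> = 4^(2*p-2-n) * 4^(n-k)" by (simp add: power_add)
      finally show ?thesis .
    qed
    show "t k - 4^(2*p-2-n) * int ((n choose k) * 4^(n-k) * franel k) =
      ((-1)^k * int ((2*k) choose k) - 4^k * int (n choose k)) * (16^(p-1-k) * int (franel k))"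
      unfolding t_def of_nat_mult of_nat_power of_nat_numeral by (rule ring_aux[OF e])
  qed
  have d3: "int p dvd (\<Sum>k\<le>n. ((-1)^k * int ((2*k) choose k) - 4^k * int (n choose k)) * (16^(p-1-k) * int (franel k)))"
  proof (intro dvd_sum dvd_mult2)
    fix k assume k: "k \<in> {..n}"
    then have "k \<le> n" by simp
    then show "int p dvd (-1)^k * int ((2*k) choose k) - 4^k * int (n choose k)"
      by (rule central_cong[OF p pn])
  qed
  have d4: "int p dvd 4^(2*p-2-n) * int (\<Sum>k\<le>n. (n choose k) * 4^(n-k) * franel k)"
    using A_dvd[OF p pn odd] by (rule dvd_mult)
  have "int p dvd (\<Sum>k\<le>n. t k)"
  proof -
    have hh: "(\<Sum>k\<le>n. t k) = ((\<Sum>k\<le>n. t k) - 4^(2*p-2-n) * int (\<Sum>k\<le>n. (n choose k) * 4^(n-k) * franel k))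
       + 4^(2*p-2-n) * int (\<Sum>k\<le>n. (n choose k) * 4^(n-k) * franel k)" by simp
    have dD: "int p dvd ((\<Sum>k\<le>n. t k) - 4^(2*p-2-n) * int (\<Sum>k\<le>n. (n choose k) * 4^(n-k) * franel k))"
      unfolding eq by (rule d3)
    show ?thesis by (subst hh) (rule dvd_add[OF dD d4])
  qed
  then have "int p dvd (\<Sum>k\<le>p-1. t k)" unfolding s by (rule dvd_add[OF _ d2])
  then show ?thesis unfolding t_def .
qed



lemma rat_term:
  assumes k: "k \<le> p - 1"
  shows "(x::rat) / (-16)^k = ((-1)^k * 16^(p-1-k) * x) / 16^(p-1)"
proof -
  have a: "(-16::rat)^k = (-1)^k * 16^k" by (simp flip: power_mult_distrib)
  have b: "(-1::rat)^k * (-1)^k = 1" by (simp flip: power_mult_distrib)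
  have c: "(16::rat)^k * 16^(p-1-k) = 16^(p-1)" using k by (simp flip: power_add)
  have nz: "(-16::rat)^k \<noteq> 0" by simp
  have "((-1)^k * 16^(p-1-k) * x) * (-16::rat)^k = x * (((-1)^k * (-1)^k) * (16^k * 16^(p-1-k)))"
    unfolding a by (simp only: mult_ac)
  also have "\<dots> = x * 16^(p-1)" unfolding b c by simp
  finally have e: "((-1)^k * 16^(p-1-k) * x) * (-16::rat)^k = x * 16^(p-1)" .
  have nz2: "(16::rat)^(p-1) \<noteq> 0" by simp
  show ?thesis by (rule iffD2[OF frac_eq_eq[OF nz nz2]]) (rule e[symmetric])
qed

lemma sum_rat:
  "(\<Sum>k=0..p-1. of_nat ((2*k) choose k) * of_nat (franel k) / (-16::rat) ^ k)
   = of_int (\<Sum>k\<le>p-1. (-1)^k * int ((2*k) choose k) * 16^(p-1-k) * int (franel k)) / of_int (16^(p-1))"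
  unfolding of_int_sum sum_divide_distrib atLeast0AtMost
proof (rule sum.cong[OF refl])
  fix k assume "k \<in> {..p-1}"
  then have k: "k \<le> p - 1" by simp
  show "of_nat ((2*k) choose k) * of_nat (franel k) / (-16::rat) ^ k =
    of_int ((-1)^k * int ((2*k) choose k) * 16^(p-1-k) * int (franel k)) / of_int (16^(p-1))"
    unfolding rat_term[OF k] by simp
qed

theorem theorem1p3:
  fixes p :: nat
  assumes "prime p" and "p mod 4 = 3"
  shows "rat_cong (\<Sum>k=0..p-1. of_nat ((2*k) choose k) * of_nat (franel k) / (-16::rat) ^ k)
                  0 (int p)"
proof -
  define n where "n = 2 * (p div 4) + 1"
  have pn: "p = 2*n+1" using assms(2) unfolding n_def by presburger
  have odd: "odd n" unfolding n_def by simp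
  define I where "I = (\<Sum>k\<le>p-1. (-1)^k * int ((2*k) choose k) * 16^(p-1-k) * int (franel k))"
  define D :: int where "D = 16^(p-1)"
  have dI: "int p dvd I" unfolding I_def by (rule I_dvd[OF assms(1) pn odd])
  have pi: "prime (int p)" using assms(1) by simp
  have nD: "\<not> int p dvd D"
  proof
    assume "int p dvd D"
    then have "int p dvd 2^(4*(p-1))" unfolding D_def by (simp add: power_mult)
    then have "int p dvd 2" using pi prime_dvd_power by blast
    then have "p dvd 2" by (metis int_dvd_int_iff of_nat_numeral)
    then have "p \<le> 2" by (simp add: dvd_imp_le)
    moreover have "n \<ge> 1" using odd by (cases n) auto
    ultimately show False using pn by simp
  qed
  have Dnz: "D \<noteq> 0" unfolding D_def by simp
  obtain a b where q: "quotient_of ((\<Sum>k=0..p-1. of_nat ((2*k) choose k) * of_nat (franel k) / (-16::rat) ^ k) - 0) = (a, b)"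
    by (cases "quotient_of ((\<Sum>k=0..p-1. of_nat ((2*k) choose k) * of_nat (franel k) / (-16::rat) ^ k) - 0)") auto
  have bpos: "b > 0" using quotient_of_denom_pos[OF q] .
  have cop: "coprime a b" using quotient_of_coprime[OF q] .
  have "of_int a / of_int b = (of_int I / of_int D :: rat)"
    using quotient_of_div[OF q] sum_rat[of p] unfolding I_def D_def by simp
  then have "of_int a * of_int D = (of_int I * of_int b :: rat)"
    using bpos Dnz by (simp add: field_simps)
  then have ab: "a * D = I * b" by (metis of_int_eq_iff of_int_mult)
  have pa: "int p dvd a"
  proof -
    have "int p dvd a * D" unfolding ab using dI by simp
    then show ?thesis using pi nD by (simp add: prime_dvd_mult_iff)
  qed
  have bD: "b dvd D"
  proof -
    have "b dvd a * D" unfolding ab by simp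
    then show ?thesis using cop by (simp add: coprime_commute coprime_dvd_mult_right_iff)
  qed
  have cb: "coprime b (int p)"
  proof (rule ccontr)
    assume "\<not> coprime b (int p)"
    then have "int p dvd b" using pi by (metis coprime_commute prime_imp_coprime)
    then have "int p dvd D" using bD by (rule dvd_trans)
    then show False using nD by simp
  qed
  show ?thesis unfolding rat_cong_def using q pa cb by simp
qed

end
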